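(* Let $d>2$, let $\alpha,\lambda\in\overline{\mathbb Q}^*$, let $|\cdot|_v$ be an absolute value on $\overline{\mathbb Q}$, and let $L=\max\{|\alpha|_v,1/|\alpha|_v\}$. Then for all $n_0\ge1$, $$\left|\lim_{n\to\infty}\frac{\log M_{n,v}}{d^n}-\frac{\log M_{n_0,v}}{d^{n_0}}\right|\le(3d-2)\log(2L).$$
   Context: Define $A_0=\alpha$, $B_0=1$, and for $n\ge0$, $A_{n+1}=A_n^d+\lambda B_n^d$, $B_{n+1}=A_nB_n^{d-1}$ (so $[A_n:B_n]$ is the $n$-th iterate of $\alpha$ under $z\mapsto(z^d+\lambda)/z$). Set $M_{n,v}=\max\{|A_n|_v,|B_n|_v\}$. *)

theory Defs
  imports Complex_Main "HOL-Computational_Algebra.Polynomial"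
begin

text \<open>The algebraic closure of Q is realised as the set of algebraic complex numbers.\<close>
definition Qbar :: "complex set" where
  "Qbar = {z. algebraic z}"

definition is_absval_Qbar :: "(complex \<Rightarrow> real) \<Rightarrow> bool" where
  "is_absval_Qbar v \<longleftrightarrow>
     (\<forall>x\<in>Qbar. v x \<ge> 0 \<and> (v x = 0 \<longleftrightarrow> x = 0)) \<and>
     (\<forall>x\<in>Qbar. \<forall>y\<in>Qbar. v (x * y) = v x * v y) \<and>
     (\<forall>x\<in>Qbar. \<forall>y\<in>Qbar. v (x + y) \<le> v x + v y)"

text \<open>Homogeneous lift (A_n, B_n) of the orbit of alpha under z \<mapsto> (z^d + lambda)/z.\<close>
fun AB :: "nat \<Rightarrow> complex \<Rightarrow> complex \<Rightarrow> nat \<Rightarrow> complex \<times> complex" where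
  "AB d lam alpha 0 = (alpha, 1)"
| "AB d lam alpha (Suc n) =
     (let (A, B) = AB d lam alpha n in (A ^ d + lam * B ^ d, A * B ^ (d - 1)))"

definition Mv :: "(complex \<Rightarrow> real) \<Rightarrow> nat \<Rightarrow> complex \<Rightarrow> complex \<Rightarrow> nat \<Rightarrow> real" where
  "Mv v d lam alpha n = max (v (fst (AB d lam alpha n))) (v (snd (AB d lam alpha n)))"

end

theory Submission
  imports Defs
begin

interpretation qs: vector_space "(\<lambda>q (z::complex). of_rat q * z)"
  by unfold_locales (auto simp: algebra_simps of_rat_add of_rat_mult)

lemma qs_scale_Rats: "w \<in> \<rat> \<Longrightarrow> y \<in> qs.span S \<Longrightarrow> w * y \<in> qs.span S"
  by (metis Rats_cases qs.span_scale)

lemma powers_span_alg: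
  fixes z :: complex
  assumes T: "finite T" and sp: "\<And>k. z ^ k \<in> qs.span T"
  shows "algebraic z"
proof (cases "inj_on (\<lambda>k. z ^ k) {..card T}")
  case True
  define S where "S = (\<lambda>k. z ^ k) ` {..card T}"
  have fS: "finite S" unfolding S_def by simp
  have cS: "card S = Suc (card T)" unfolding S_def using True by (simp add: card_image)
  have "S \<subseteq> qs.span T" using sp unfolding S_def by auto
  hence "\<not> qs.independent S"
    using qs.independent_span_bound[OF T] cS by fastforce
  then obtain u where u: "\<exists>v\<in>S. u v \<noteq> 0" "(\<Sum>v\<in>S. of_rat (u v) * v) = 0"
    using qs.dependent_finite[OF fS] by auto
  define p where "p = (\<Sum>k\<le>card T. monom (of_rat (u (z ^ k)) :: complex) k)"
  have cp: "coeff p i = (if i \<le> card T then of_rat (u (z ^ i)) else 0)" for i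
    unfolding p_def by (simp add: coeff_sum coeff_monom)
  have "poly p z = (\<Sum>k\<le>card T. of_rat (u (z ^ k)) * z ^ k)"
    unfolding p_def by (simp add: poly_sum poly_monom)
  also have "\<dots> = (\<Sum>v\<in>S. of_rat (u v) * v)"
    unfolding S_def using True by (simp add: sum.reindex)
  finally have pz: "poly p z = 0" using u(2) by simp
  from u(1) obtain k where k: "k \<le> card T" "u (z ^ k) \<noteq> 0" unfolding S_def by auto
  have "p \<noteq> 0"
  proof
    assume "p = 0"
    hence "coeff p k = 0" by simp
    with k cp show False by simp
  qed
  moreover have "coeff p i \<in> \<rat>" for i by (simp add: cp)
  ultimately show ?thesis using pz by (intro algebraicI') auto
next
  case False
  then obtain i j where ij: "i \<le> card T" "j \<le> card T" "i \<noteq> j" "z ^ i = z ^ j"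
    unfolding inj_on_def by auto
  define p :: "complex poly" where "p = monom 1 j - monom 1 i"
  have cp: "coeff p k = (if k = j then 1 else 0) - (if k = i then 1 else 0)" for k
    unfolding p_def by (simp add: coeff_monom)
  have "coeff p j = 1" using cp ij by simp
  hence "p \<noteq> 0" by auto
  moreover have "poly p z = 0" unfolding p_def using ij by (simp add: poly_monom)
  moreover have "coeff p k \<in> \<rat>" for k by (simp add: cp)
  ultimately show ?thesis by (intro algebraicI') auto
qed

lemma alg_power_span:
  fixes x :: complex
  assumes "algebraic x"
  shows "\<exists>m. \<forall>k. x ^ k \<in> qs.span ((\<lambda>i. x ^ i) ` {..<m})"
proof -
  obtain p where pQ: "\<forall>i. coeff p i \<in> \<rat>" and p0: "p \<noteq> 0" and px: "poly p x = 0"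
    using assms unfolding algebraic_altdef by blast
  define m where "m = degree p"
  have m0: "m \<noteq> 0"
  proof
    assume "m = 0"
    then obtain c where "p = [:c:]" unfolding m_def by (metis degree_eq_zeroE)
    with p0 px show False by simp
  qed
  define c where "c = lead_coeff p"
  have c0: "c \<noteq> 0" using p0 unfolding c_def by simp
  have cQ: "c \<in> \<rat>" using pQ unfolding c_def by simp
  have "poly p x = (\<Sum>i\<le>m. coeff p i * x ^ i)" unfolding m_def by (simp add: poly_altdef)
  also have "\<dots> = (\<Sum>i<m. coeff p i * x ^ i) + c * x ^ m"
    unfolding c_def m_def by (simp add: lessThan_Suc_atMost[symmetric])
  finally have xm: "x ^ m = (\<Sum>i<m. (- coeff p i / c) * x ^ i)"
    using px c0 by (simp add: sum_divide_distrib[symmetric] field_simps sum_negf eq_neg_iff_add_eq_0)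
  have "x ^ k \<in> qs.span ((\<lambda>i. x ^ i) ` {..<m})" for k
  proof (induction k rule: less_induct)
    case (less k)
    show ?case
    proof (cases "k < m")
      case True
      thus ?thesis by (intro qs.span_base) auto
    next
      case False
      have "x ^ k = x ^ (k - m) * x ^ m" using False by (simp add: power_add[symmetric])
      also have "\<dots> = (\<Sum>i<m. (- coeff p i / c) * x ^ (k - m + i))"
        unfolding xm by (simp add: sum_distrib_left power_add algebra_simps)
      finally have eq: "x ^ k = \<dots>" .
      show ?thesis unfolding eq
      proof (intro qs.span_sum qs_scale_Rats)
        fix i assume "i \<in> {..<m}"
        thus "- coeff p i / c \<in> \<rat>" using pQ cQ by simp
        show "x ^ (k - m + i) \<in> qs.span ((\<lambda>i. x ^ i) ` {..<m})"
          using \<open>i \<in> {..<m}\<close> False m0 by (intro less) auto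
      qed
    qed
  qed
  thus ?thesis by blast
qed

lemma span_mult:
  assumes "u \<in> qs.span A" "w \<in> qs.span B"
  shows "u * w \<in> qs.span ((\<lambda>(a,b). a * b) ` (A \<times> B))"
proof -
  have base: "a * w \<in> qs.span ((\<lambda>(a,b). a * b) ` (A \<times> B))" if "a \<in> A" for a
    using assms(2)
  proof (induction w rule: qs.span_induct_alt)
    case base thus ?case by (simp add: qs.span_zero)
  next
    case (step c b y)
    have "a * (of_rat c * b + y) = of_rat c * (a * b) + a * y" by (simp add: algebra_simps)
    moreover have "a * b \<in> qs.span ((\<lambda>(a,b). a * b) ` (A \<times> B))"
      using that step by (intro qs.span_base) auto
    ultimately show ?case using step by (simp add: qs.span_add qs.span_scale)
  qed
  show ?thesis using assms(1)
  proof (induction u rule: qs.span_induct_alt)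
    case base thus ?case by (simp add: qs.span_zero)
  next
    case (step c a y)
    have "(of_rat c * a + y) * w = of_rat c * (a * w) + y * w" by (simp add: algebra_simps)
    thus ?case using step base by (simp add: qs.span_add qs.span_scale)
  qed
qed

lemma algebraic_plus_times:
  fixes x y :: complex
  assumes "algebraic x" "algebraic y"
  shows "algebraic (x + y) \<and> algebraic (x * y)"
proof -
  obtain m where m: "\<And>k. x ^ k \<in> qs.span ((\<lambda>i. x ^ i) ` {..<m})" using alg_power_span[OF assms(1)] by blast
  obtain n where n: "\<And>k. y ^ k \<in> qs.span ((\<lambda>i. y ^ i) ` {..<n})" using alg_power_span[OF assms(2)] by blast
  define T where "T = (\<lambda>(a,b). a * b) ` ((\<lambda>i. x ^ i) ` {..<m} \<times> (\<lambda>i. y ^ i) ` {..<n})"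
  have fT: "finite T" unfolding T_def by simp
  have xy: "x ^ a * y ^ b \<in> qs.span T" for a b unfolding T_def by (intro span_mult m n)
  have "(x + y) ^ k \<in> qs.span T" for k
    unfolding binomial_ring
  proof (intro qs.span_sum)
    fix a assume "a \<in> {..k}"
    have "of_nat (k choose a) * x ^ a * y ^ (k - a) = of_nat (k choose a) * (x ^ a * y ^ (k - a))"
      by simp
    moreover have "(of_nat (k choose a) :: complex) \<in> \<rat>" by simp
    ultimately show "of_nat (k choose a) * x ^ a * y ^ (k - a) \<in> qs.span T"
      using qs_scale_Rats xy by metis
  qed
  moreover have "(x * y) ^ k \<in> qs.span T" for k using xy by (simp add: power_mult_distrib)
  ultimately show ?thesis using powers_span_alg[OF fT] by blast
qed


context
  fixes a b :: "nat \<Rightarrow> real" and R :: real and d :: nat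
  assumes d3: "d \<ge> 3" and R0: "R > 0"
    and an: "\<And>n. a n \<ge> 0" and bn: "\<And>n. b n \<ge> 0"
    and F1: "\<And>n. a (Suc n) \<le> a n ^ d + R * b n ^ d"
    and F2: "\<And>n. a n ^ d \<le> a (Suc n) + R * b n ^ d"
    and F3: "\<And>n. b (Suc n) = a n * b n ^ (d - 1)"
    and F2': "\<And>n. R * b n ^ d \<le> a (Suc n) + a n ^ d"
    and F4: "\<And>n. R * b n ^ d * b n ^ (d - 1) \<le> b n ^ (d - 1) * a (Suc n) + a n ^ (d - 1) * b (Suc n)"
    and F5: "\<And>n. a n ^ d * a n ^ (d - 1) \<le> a n ^ (d - 1) * a (Suc n) + R * a n ^ (d - 2) * b n * b (Suc n)"
begin

lemma pw: "(x::real) * x ^ (d - 1) = x ^ d"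
proof -
  have "d = Suc (d - 1)" using d3 by simp
  hence "x ^ d = x ^ Suc (d - 1)" by metis
  thus ?thesis by simp
qed

lemma up: "max (a (Suc n)) (b (Suc n)) \<le> (1 + R) * max (a n) (b n) ^ d"
proof -
  let ?m = "max (a n) (b n)"
  have m0: "?m \<ge> 0" using an[of n] by simp
  have "a n ^ d \<le> ?m ^ d" "b n ^ d \<le> ?m ^ d" using an[of n] bn[of n] by (auto intro!: power_mono)
  hence "R * b n ^ d \<le> R * ?m ^ d" "a n ^ d \<le> ?m ^ d" using R0 by auto
  hence A: "a (Suc n) \<le> (1 + R) * ?m ^ d" using F1[of n] by (simp add: distrib_right)
  have "b n ^ (d - 1) \<le> ?m ^ (d - 1)" using bn[of n] by (auto intro!: power_mono)
  hence "b (Suc n) \<le> ?m * ?m ^ (d - 1)" unfolding F3 using an[of n] bn[of n] m0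
    by (intro mult_mono) auto
  hence "b (Suc n) \<le> ?m ^ d" by (simp only: pw)
  moreover have "?m ^ d \<le> (1 + R) * ?m ^ d" using R0 m0 by (simp add: distrib_right)
  ultimately show ?thesis using A by simp
qed

lemma pw2: "(x::real) ^ (d - 2) * x = x ^ (d - 1)"
proof -
  have "d - 1 = Suc (d - 2)" using d3 by simp
  thus ?thesis by (simp add: mult.commute)
qed

lemma lo: "max (a n) (b n) ^ d \<le> max (2 / R) (1 + R) * max (a (Suc n)) (b (Suc n))"
proof -
  let ?m' = "max (a (Suc n)) (b (Suc n))"
  have m'0: "?m' \<ge> 0" using an[of "Suc n"] by simp
  have d0: "d > 0" using d3 by simp
  show ?thesis
  proof (cases "a n \<le> b n")
    case True
    hence mb: "max (a n) (b n) = b n" by simp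
    show ?thesis
    proof (cases "b n = 0")
      case True
      have "max (2 / R) (1 + R) * ?m' \<ge> 0" using m'0 R0 by simp
      thus ?thesis using mb True d0 by (simp add: zero_power)
    next
      case False
      hence bp: "b n > 0" using bn[of n] by simp
      hence Bp: "b n ^ (d - 1) > 0" by simp
      have "a n ^ (d - 1) \<le> b n ^ (d - 1)" using True an[of n] by (intro power_mono) auto
      hence 1: "a n ^ (d - 1) * b (Suc n) \<le> b n ^ (d - 1) * ?m'"
        using an bn by (intro mult_mono) auto
      have 2: "b n ^ (d - 1) * a (Suc n) \<le> b n ^ (d - 1) * ?m'"
        using Bp by (intro mult_left_mono) auto
      have "(R * b n ^ d) * b n ^ (d - 1) \<le> (2 * ?m') * b n ^ (d - 1)"
        using F4[of n] 1 2 by (simp add: algebra_simps)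
      hence "R * b n ^ d \<le> 2 * ?m'" using Bp by simp
      hence "b n ^ d \<le> (2 / R) * ?m'" using R0 by (simp add: field_simps)
      also have "\<dots> \<le> max (2 / R) (1 + R) * ?m'" using m'0 by (intro mult_right_mono) auto
      finally show ?thesis using mb by simp
    qed
  next
    case False
    hence ma: "max (a n) (b n) = a n" and ap: "a n > 0" using bn[of n] by auto
    hence Ap: "a n ^ (d - 1) > 0" by simp
    have "a n ^ (d - 2) * b n \<le> a n ^ (d - 2) * a n" using False ap by (intro mult_left_mono) auto
    hence "a n ^ (d - 2) * b n \<le> a n ^ (d - 1)" by (simp only: pw2)
    hence "(a n ^ (d - 2) * b n) * b (Suc n) \<le> a n ^ (d - 1) * ?m'"
      using bn an by (intro mult_mono) auto
    hence 1: "R * a n ^ (d - 2) * b n * b (Suc n) \<le> R * (a n ^ (d - 1) * ?m')"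
      using R0 by (simp add: mult.assoc mult_left_mono)
    have 2: "a n ^ (d - 1) * a (Suc n) \<le> a n ^ (d - 1) * ?m'"
      using Ap by (intro mult_left_mono) auto
    have "(a n ^ d) * a n ^ (d - 1) \<le> ((1 + R) * ?m') * a n ^ (d - 1)"
      using F5[of n] 1 2 by (simp add: algebra_simps)
    hence "a n ^ d \<le> (1 + R) * ?m'" using Ap by simp
    also have "\<dots> \<le> max (2 / R) (1 + R) * ?m'" using m'0 by (intro mult_right_mono) auto
    finally show ?thesis using ma by simp
  qed
qed

lemma pos_step: "max (a n) (b n) > 0 \<Longrightarrow> max (a (Suc n)) (b (Suc n)) > 0"
proof -
  assume "max (a n) (b n) > 0"
  hence "max (a n) (b n) ^ d > 0" by simp
  hence "max (2 / R) (1 + R) * max (a (Suc n)) (b (Suc n)) > 0" using lo[of n] by linarith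
  moreover have "max (2 / R) (1 + R) > 0" using R0 by simp
  ultimately show ?thesis using R0 by (auto simp: zero_less_mult_iff)
qed

context
  fixes L :: real
  assumes a0: "a 0 > 0" and b0: "b 0 = 1" and Ldef: "L = max (a 0) (1 / a 0)"
begin

lemma mpos: "max (a n) (b n) > 0"
  by (induction n) (use b0 pos_step in auto)

lemma L1: "L \<ge> 1"
proof (cases "a 0 \<ge> 1")
  case True thus ?thesis using Ldef by simp
next
  case False
  hence "1 / a 0 \<ge> 1" using a0 by (simp add: field_simps)
  thus ?thesis using Ldef by simp
qed

lemma a0L: "a 0 \<le> L" "1 / L \<le> a 0"
proof -
  show "a 0 \<le> L" using Ldef by simp
  have "1 / a 0 \<le> L" using Ldef by simp
  thus "1 / L \<le> a 0" using a0 L1 by (simp add: field_simps)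
qed

definition q :: "nat \<Rightarrow> real" where "q n = 2 / (2 * L) ^ ((d - 1) ^ n)"

lemma q_pos: "q n > 0" using L1 unfolding q_def by simp

lemma q_le1: "q n \<le> 1"
proof -
  have "(2 * L) ^ 1 \<le> (2 * L) ^ ((d - 1) ^ n)"
    using L1 d3 by (intro power_increasing) auto
  thus ?thesis using L1 unfolding q_def by (simp add: field_simps)
qed

lemma q_mono: "k \<le> n \<Longrightarrow> q n \<le> q k"
proof -
  assume "k \<le> n"
  hence "(d - 1) ^ k \<le> (d - 1) ^ n" using d3 by (intro power_increasing) auto
  hence "(2 * L) ^ ((d - 1) ^ k) \<le> (2 * L) ^ ((d - 1) ^ n)"
    by (rule power_increasing[where a="2*L"]) (use L1 in auto)
  moreover have "(2 * L) ^ ((d - 1) ^ k) > 0" using L1 by simp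
  ultimately show ?thesis unfolding q_def by (simp add: frac_le)
qed

lemma q_step: "q (Suc n) \<le> q n ^ (d - 1) / 2"
proof -
  define X where "X = (2 * L) ^ ((d - 1) ^ Suc n)"
  have X0: "X > 0" using L1 unfolding X_def by simp
  have e: "((2 * L) ^ ((d - 1) ^ n)) ^ (d - 1) = X"
    unfolding X_def by (metis power_mult power_Suc mult.commute)
  have "q n ^ (d - 1) = 2 ^ (d - 1) / X"
    unfolding q_def by (simp only: power_divide e)
  moreover have "(4::real) \<le> 2 ^ (d - 1)"
  proof -
    have "(2::real) ^ 2 \<le> 2 ^ (d - 1)" using d3 by (intro power_increasing) auto
    thus ?thesis by simp
  qed
  ultimately show ?thesis unfolding q_def X_def[symmetric] using X0
    by (simp add: field_simps)
qed

definition D :: "nat \<Rightarrow> bool" where "D k \<longleftrightarrow> a k < b k \<and> a k ^ d < 2 * R * b k ^ d"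

lemma tiny_inv:
  assumes Rs: "R < 1/2"
  shows "(\<forall>k<n. \<not> D k) \<Longrightarrow> q n * b n \<le> a n"
proof (induction n)
  case 0
  thus ?case using a0L b0 unfolding q_def by (simp add: Ldef)
next
  case (Suc n)
  hence IH: "q n * b n \<le> a n" and nD: "\<not> D n" by auto
  have Rb: "R * b n ^ d \<le> a n ^ d / 2"
  proof (cases "b n \<le> a n")
    case True
    hence "b n ^ d \<le> a n ^ d" using bn by (intro power_mono) auto
    hence "R * b n ^ d \<le> R * a n ^ d" using R0 by simp
    also have "\<dots> \<le> (1/2) * a n ^ d" using Rs an[of n] by (intro mult_right_mono) auto
    also have "\<dots> = a n ^ d / 2" by simp
    finally show ?thesis .
  next
    case False
    thus ?thesis using nD unfolding D_def by simp
  qed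
  hence A: "a n ^ d / 2 \<le> a (Suc n)" using F2[of n] by simp
  have qb: "(q n * b n) ^ (d - 1) \<le> a n ^ (d - 1)"
    using IH q_pos bn by (intro power_mono) (auto intro: mult_nonneg_nonneg less_imp_le)
  have "q (Suc n) * b (Suc n) \<le> (q n ^ (d - 1) / 2) * (a n * b n ^ (d - 1))"
    unfolding F3 using q_step an bn by (intro mult_right_mono) auto
  also have "\<dots> = a n * (q n * b n) ^ (d - 1) / 2" by (simp add: power_mult_distrib)
  also have "\<dots> \<le> a n * a n ^ (d - 1) / 2" using qb an[of n] by (simp add: mult_left_mono)
  also have "\<dots> = a n ^ d / 2" by (simp only: pw)
  finally show ?case using A by simp
qed

lemma tiny_step:
  assumes Rs: "R < 1/2"
  shows "q n ^ d / 4 * max (a n) (b n) ^ d \<le> max (a (Suc n)) (b (Suc n))"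
proof (cases "\<exists>k<n. D k")
  case False
  hence IH: "q n * b n \<le> a n" using tiny_inv[OF Rs] by auto
  have qd: "q n ^ d \<le> 1" using q_pos[of n] q_le1[of n] by (intro power_le_one) auto
  have qd': "q n ^ d \<le> q n"
  proof -
    have "q n ^ d \<le> q n ^ 1" using q_pos q_le1 d3 by (intro power_decreasing) (auto intro: less_imp_le)
    thus ?thesis by simp
  qed
  show ?thesis
  proof (cases "b n \<le> a n")
    case True
    hence "b n ^ d \<le> a n ^ d" using bn by (intro power_mono) auto
    hence "R * b n ^ d \<le> R * a n ^ d" using R0 by simp
    also have "\<dots> \<le> (1/2) * a n ^ d" using Rs an[of n] by (intro mult_right_mono) auto
    also have "\<dots> = a n ^ d / 2" by simp
    finally have "a n ^ d / 2 \<le> a (Suc n)" using F2[of n] by simp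
    moreover have "q n ^ d / 4 * a n ^ d \<le> (1/2) * a n ^ d" using qd an[of n]
      by (intro mult_right_mono) auto
    ultimately have "q n ^ d / 4 * a n ^ d \<le> a (Suc n)" by linarith
    moreover have "max (a n) (b n) = a n" using True by simp
    ultimately show ?thesis by simp
  next
    case False
    have "q n ^ d / 4 \<le> q n" using qd' q_pos[of n] by simp
    hence "q n ^ d / 4 * b n ^ d \<le> q n * b n ^ d"
      using bn[of n] by (intro mult_right_mono) auto
    also have "\<dots> = (q n * b n) * b n ^ (d - 1)" by (simp add: pw[symmetric])
    also have "\<dots> \<le> a n * b n ^ (d - 1)" using IH bn[of n] by (simp add: mult_right_mono)
    finally show ?thesis using False F3[of n] by simp
  qed
next
  case True
  then obtain k0 where "k0 < n" "D k0" by auto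
  define k where "k = (LEAST k. D k)"
  have Dk: "D k" unfolding k_def using \<open>D k0\<close> by (rule LeastI)
  have kn: "k \<le> n" unfolding k_def using \<open>k0 < n\<close> \<open>D k0\<close> by (meson Least_le less_imp_le order_trans)
  have "\<forall>j<k. \<not> D j" unfolding k_def using not_less_Least by blast
  hence IH: "q k * b k \<le> a k" using tiny_inv[OF Rs] by auto
  from Dk have bk: "b k > 0" and ak: "a k ^ d < 2 * R * b k ^ d" unfolding D_def using an[of k] by auto
  have "0 \<le> q k * b k" using q_pos[of k] bk by simp
  hence "(q k * b k) ^ d \<le> a k ^ d" using IH by (intro power_mono) auto
  hence "q k ^ d * b k ^ d < (2 * R) * b k ^ d" using ak by (simp add: power_mult_distrib)
  hence "q k ^ d < 2 * R" using bk by simp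
  moreover have "q n ^ d \<le> q k ^ d" using q_mono[OF kn] q_pos by (intro power_mono) (auto intro: less_imp_le)
  ultimately have qR: "q n ^ d / 4 \<le> R / 2" by simp
  have "R * R \<le> (1/2) * (1/2)" using Rs R0 by (intro mult_mono) auto
  hence "(1 + R) * R \<le> 2" using Rs by (simp add: algebra_simps)
  hence "1 + R \<le> 2 / R" using R0 by (simp add: field_simps)
  hence "max (2 / R) (1 + R) = 2 / R" by simp
  hence "max (a n) (b n) ^ d \<le> 2 / R * max (a (Suc n)) (b (Suc n))" using lo[of n] by simp
  hence "R / 2 * max (a n) (b n) ^ d \<le> max (a (Suc n)) (b (Suc n))" using R0 by (simp add: field_simps)
  moreover have "q n ^ d / 4 * max (a n) (b n) ^ d \<le> R / 2 * max (a n) (b n) ^ d"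
    using qR mpos[of n] by (intro mult_right_mono) auto
  ultimately show ?thesis by linarith
qed

lemma huge_facts:
  assumes RH: "R \<ge> (2 * L) ^ (2 * d)"
  shows "R / (2 * L) \<ge> 2" "(R / (2 * L)) ^ d \<ge> 2 * R" "(R / (2 * L)) ^ (d - 2) \<ge> 2"
    "R \<ge> 2 * L ^ d"
proof -
  define P where "P = 2 * L"
  have P2: "P \<ge> 2" using L1 unfolding P_def by simp
  have "P ^ 2 \<le> P ^ (2 * d)" using P2 d3 by (intro power_increasing) auto
  moreover have "2 * P \<le> P ^ 2" using P2 by (simp add: power2_eq_square mult_right_mono)
  ultimately have R2P: "2 * P \<le> R" using RH unfolding P_def by linarith
  thus t2: "R / (2 * L) \<ge> 2" using P2 unfolding P_def by (simp add: field_simps)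
  have R1: "R \<ge> 1" using R2P P2 by linarith
  have "R ^ 2 \<le> R ^ (d - 1)" using R1 d3 by (intro power_increasing) auto
  moreover have "(P ^ (2 * d)) ^ 2 \<le> R ^ 2" using RH P2 unfolding P_def by (intro power_mono) auto
  moreover have "(P ^ (2 * d)) ^ 2 = P ^ d * P ^ (3 * d)" by (simp add: power_mult[symmetric] power_add[symmetric])
  moreover have "P ^ 1 \<le> P ^ (3 * d)" using P2 d3 by (intro power_increasing) auto
  moreover have "P ^ d * 2 \<le> P ^ d * P ^ (3 * d)"
  proof -
    have "2 \<le> P ^ (3 * d)" using P2 \<open>P ^ 1 \<le> P ^ (3 * d)\<close> by simp
    thus ?thesis using P2 by (intro mult_left_mono) auto
  qed
  ultimately have "P ^ d * 2 \<le> R ^ (d - 1)" by linarith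
  hence "R * (P ^ d * 2) \<le> R * R ^ (d - 1)" using R1 by simp
  hence "R * (P ^ d * 2) \<le> R ^ d" by (simp only: pw)
  hence "2 * R * P ^ d \<le> R ^ d" by (simp add: algebra_simps)
  moreover have "P ^ d > 0" using P2 by simp
  ultimately show "(R / (2 * L)) ^ d \<ge> 2 * R" unfolding P_def[symmetric]
    by (simp add: power_divide field_simps)
  have "(R / (2 * L)) ^ 1 \<le> (R / (2 * L)) ^ (d - 2)" using t2 d3 by (intro power_increasing) auto
  thus "(R / (2 * L)) ^ (d - 2) \<ge> 2" using t2 by simp
  have "P ^ d \<le> P ^ (2 * d)" using P2 by (intro power_increasing) auto
  moreover have "2 * L ^ d \<le> P ^ d"
  proof -
    have "(2::real) ^ 1 \<le> 2 ^ d" using d3 by (intro power_increasing) auto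
    hence "2 * L ^ d \<le> 2 ^ d * L ^ d" using L1 by (intro mult_right_mono) auto
    thus ?thesis unfolding P_def by (simp add: power_mult_distrib)
  qed
  ultimately show "R \<ge> 2 * L ^ d" using RH unfolding P_def by linarith
qed

lemma huge_inv:
  assumes RH: "R \<ge> (2 * L) ^ (2 * d)"
  shows "R / (2 * L) * b (Suc k) \<le> a (Suc k) \<and> a (Suc k) > 0"
proof (induction k)
  case 0
  define t where "t = R / (2 * L)"
  note hf = huge_facts[OF RH, folded t_def]
  have b1: "b 1 = a 0" using F3[of 0] b0 by simp
  have "R \<le> a 1 + a 0 ^ d" using F2'[of 0] b0 by simp
  moreover have "a 0 ^ d \<le> L ^ d" using a0L a0 by (intro power_mono) auto
  ultimately have a1: "a 1 \<ge> R / 2" using hf(4) by simp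
  have "t * b 1 \<le> t * L" unfolding b1 using a0L hf(1) by (intro mult_left_mono) auto
  also have "t * L = R / 2" unfolding t_def using L1 by (simp add: field_simps)
  finally show ?case using a1 R0 unfolding t_def by simp
next
  case (Suc k)
  define t where "t = R / (2 * L)"
  note hf = huge_facts[OF RH, folded t_def]
  define n where "n = Suc k"
  have IH: "t * b n \<le> a n" "a n > 0" using Suc unfolding t_def n_def by auto
  have tb: "(t * b n) ^ d \<le> a n ^ d" using IH hf(1) bn[of n] by (intro power_mono) auto
  have "2 * R * b n ^ d \<le> t ^ d * b n ^ d" using hf(2) bn[of n] by (intro mult_right_mono) auto
  also have "\<dots> \<le> a n ^ d" using tb by (simp add: power_mult_distrib)
  finally have "R * b n ^ d \<le> a n ^ d / 2" by simp
  hence A: "a n ^ d / 2 \<le> a (Suc n)" using F2[of n] by simp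
  have tb1: "(t * b n) ^ (d - 1) \<le> a n ^ (d - 1)" using IH hf(1) bn[of n] by (intro power_mono) auto
  have "t ^ (d - 2) * (t * b (Suc n)) = a n * (t ^ (d - 2) * t) * b n ^ (d - 1)"
    unfolding F3 by (simp add: algebra_simps)
  also have "\<dots> = a n * (t * b n) ^ (d - 1)" by (simp only: pw2 power_mult_distrib mult.assoc)
  also have "\<dots> \<le> a n * a n ^ (d - 1)" using tb1 IH by (intro mult_left_mono) auto
  also have "\<dots> = a n ^ d" by (simp only: pw)
  finally have 1: "t ^ (d - 2) * (t * b (Suc n)) \<le> a n ^ d" .
  have "0 \<le> t * b (Suc n)" using hf(1) bn[of "Suc n"] by simp
  hence "2 * (t * b (Suc n)) \<le> t ^ (d - 2) * (t * b (Suc n))" using hf(3) by (intro mult_right_mono) auto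
  hence "t * b (Suc n) \<le> a (Suc n)" using 1 A by linarith
  moreover have "a (Suc n) > 0"
  proof -
    have "a n ^ d > 0" using IH by simp
    thus ?thesis using A by linarith
  qed
  ultimately show ?case unfolding t_def n_def by simp
qed

lemma huge_step:
  assumes RH: "R \<ge> (2 * L) ^ (2 * d)" and n1: "n \<ge> 1"
  shows "max (a n) (b n) ^ d / 2 \<le> max (a (Suc n)) (b (Suc n))"
    "max (a (Suc n)) (b (Suc n)) \<le> 2 * max (a n) (b n) ^ d"
proof -
  define t where "t = R / (2 * L)"
  note hf = huge_facts[OF RH, folded t_def]
  obtain k where n: "n = Suc k" using n1 by (cases n) auto
  have I: "t * b n \<le> a n" "a n > 0" using huge_inv[OF RH, of k] unfolding t_def n by auto
  have I': "t * b (Suc n) \<le> a (Suc n)" "a (Suc n) > 0" using huge_inv[OF RH, of "Suc k"] unfolding t_def n by auto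
  have "b n \<le> t * b n" using hf(1) bn[of n] by (simp add: mult_right_mono[of 1 t, simplified])
  hence m: "max (a n) (b n) = a n" using I by simp
  have "b (Suc n) \<le> t * b (Suc n)" using hf(1) bn[of "Suc n"] by (simp add: mult_right_mono[of 1 t, simplified])
  hence m': "max (a (Suc n)) (b (Suc n)) = a (Suc n)" using I' by simp
  have tb: "(t * b n) ^ d \<le> a n ^ d" using I hf(1) bn[of n] by (intro power_mono) auto
  have "2 * R * b n ^ d \<le> t ^ d * b n ^ d" using hf(2) bn[of n] by (intro mult_right_mono) auto
  also have "\<dots> \<le> a n ^ d" using tb by (simp add: power_mult_distrib)
  finally have Rb: "R * b n ^ d \<le> a n ^ d / 2" by simp
  show "max (a n) (b n) ^ d / 2 \<le> max (a (Suc n)) (b (Suc n))"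
    unfolding m m' using F2[of n] Rb by simp
  show "max (a (Suc n)) (b (Suc n)) \<le> 2 * max (a n) (b n) ^ d"
  proof -
    have "a n ^ d \<ge> 0" using I by simp
    thus ?thesis unfolding m m' using F1[of n] Rb by linarith
  qed
qed

lemma E_bound:
  assumes n1: "n \<ge> 1"
  defines "E \<equiv> 2 * (2 * L) ^ (3 * d * (d - 1) ^ n)"
  shows "max (a (Suc n)) (b (Suc n)) \<le> E * max (a n) (b n) ^ d"
    "max (a n) (b n) ^ d \<le> E * max (a (Suc n)) (b (Suc n))"
proof -
  let ?m = "max (a n) (b n)" and ?m' = "max (a (Suc n)) (b (Suc n))"
  define Y where "Y = (2 * L) ^ ((d - 1) ^ n)"
  have P2: "2 * L \<ge> 2" using L1 by simp
  have e1: "(d - 1) ^ n \<ge> 1" using d3 by simp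
  have Yd: "Y ^ d \<le> (2 * L) ^ (3 * d * (d - 1) ^ n)"
    unfolding Y_def power_mult[symmetric] using P2 e1 by (intro power_increasing) auto
  have P2d: "(2 * L) ^ (2 * d) \<le> (2 * L) ^ (3 * d * (d - 1) ^ n)"
    using P2 e1 by (intro power_increasing) auto
  have P2d4: "(2 * L) ^ (2 * d) \<ge> 2"
  proof -
    have "(2 * L) ^ 1 \<le> (2 * L) ^ (2 * d)" using P2 d3 by (intro power_increasing) auto
    thus ?thesis using P2 by simp
  qed
  have E2: "E \<ge> 2" unfolding E_def using P2d P2d4 by linarith
  have m0: "?m \<ge> 0" "?m' \<ge> 0" using an[of n] an[of "Suc n"] by auto
  have md: "?m ^ d \<ge> 0" using m0 by simp
  have main: "?m' \<le> E * ?m ^ d \<and> ?m ^ d \<le> E * ?m'"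
  proof (cases "R \<ge> (2 * L) ^ (2 * d)")
    case True
    have "?m' \<le> 2 * ?m ^ d" "?m ^ d \<le> 2 * ?m'" using huge_step[OF True n1] by auto
    moreover have "2 * ?m ^ d \<le> E * ?m ^ d" "2 * ?m' \<le> E * ?m'" using E2 md m0
      by (auto intro: mult_right_mono)
    ultimately show ?thesis by linarith
  next
    case False
    have RE: "1 + R \<le> E" unfolding E_def using False P2d P2d4 by linarith
    have "?m' \<le> (1 + R) * ?m ^ d" by (rule up)
    also have "\<dots> \<le> E * ?m ^ d" using RE md by (intro mult_right_mono) auto
    finally have U: "?m' \<le> E * ?m ^ d" .
    have "?m ^ d \<le> E * ?m'"
    proof (cases "R < 1/2")
      case True
      have Y1: "Y \<ge> 1" unfolding Y_def using P2 by (intro one_le_power) auto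
      have qY: "q n = 2 / Y" unfolding q_def Y_def by simp
      have "q n ^ d / 4 * ?m ^ d \<le> ?m'" by (rule tiny_step[OF True])
      hence "2 ^ d * ?m ^ d \<le> 4 * Y ^ d * ?m'" unfolding qY using Y1 by (simp add: power_divide field_simps)
      moreover have "(4::real) \<le> 2 ^ d"
      proof -
        have "(2::real) ^ 2 \<le> 2 ^ d" using d3 by (intro power_increasing) auto
        thus ?thesis by simp
      qed
      hence "4 * ?m ^ d \<le> 2 ^ d * ?m ^ d" using md by (intro mult_right_mono) auto
      ultimately have "4 * ?m ^ d \<le> 4 * Y ^ d * ?m'" by linarith
      hence "?m ^ d \<le> Y ^ d * ?m'" by simp
      also have "\<dots> \<le> E * ?m'"
      proof -
        have "Y ^ d \<le> E" unfolding E_def using Yd P2d P2d4 by linarith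
        thus ?thesis using m0 by (intro mult_right_mono) auto
      qed
      finally show ?thesis .
    next
      case False
      have "2 / R \<le> 4" using False R0 by (simp add: field_simps)
      moreover have "4 \<le> E" using P2d P2d4 unfolding E_def by linarith
      ultimately have "max (2 / R) (1 + R) \<le> E" using RE by simp
      hence "max (2 / R) (1 + R) * ?m' \<le> E * ?m'" using m0 by (intro mult_right_mono) auto
      thus ?thesis using lo[of n] by linarith
    qed
    with U show ?thesis by simp
  qed
  thus "?m' \<le> E * ?m ^ d" "?m ^ d \<le> E * ?m'" by auto
qed

end

end

lemma series_limit:
  fixes g :: "nat \<Rightarrow> real" and d :: nat and c0 c1 :: real
  assumes d3: "d \<ge> 3"
    and step: "\<And>n. n \<ge> 1 \<Longrightarrow> \<bar>g (Suc n) - real d * g n\<bar> \<le> c0 + c1 * (real d - 1) ^ n"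
    and c0: "c0 \<ge> 0" and c1: "c1 \<ge> 0" and n0: "n0 \<ge> 1"
  shows "\<exists>h. (\<lambda>n. g n / real d ^ n) \<longlonglongrightarrow> h \<and>
           \<bar>h - g n0 / real d ^ n0\<bar> \<le> c0 / (real d * (real d - 1)) + c1 * ((real d - 1) / real d)"
proof -
  define G where "G n = g n / real d ^ n" for n
  define r where "r = (real d - 1) / real d"
  have dpos: "real d > 0" and d1: "real d - 1 > 0" using d3 by auto
  have r0: "0 \<le> r" "r < 1" unfolding r_def using dpos d1 by auto
  define t where "t k = c0 / real d ^ (n0 + 1) * (1 / real d) ^ k + (c1 / real d) * r ^ n0 * r ^ k" for k
  define D where "D k = G (Suc (k + n0)) - G (k + n0)" for k
  have Dt: "\<bar>D k\<bar> \<le> t k" for k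
  proof -
    let ?n = "k + n0"
    have "D k = (g (Suc ?n) - real d * g ?n) / real d ^ Suc ?n"
      unfolding D_def G_def using dpos by (simp add: field_simps)
    hence "\<bar>D k\<bar> = \<bar>g (Suc ?n) - real d * g ?n\<bar> / real d ^ Suc ?n" by simp
    also have "\<dots> \<le> (c0 + c1 * (real d - 1) ^ ?n) / real d ^ Suc ?n"
      using step[of ?n] n0 dpos by (intro divide_right_mono) auto
    also have "\<dots> = t k"
      unfolding t_def r_def using dpos
      by (simp add: field_simps power_add power_divide)
    finally show ?thesis .
  qed
  define S where "S = c0 / real d ^ (n0 + 1) * (1 / (1 - 1 / real d)) + (c1 / real d) * r ^ n0 * (1 / (1 - r))"
  have tS: "t sums S"
    unfolding t_def S_def
    by (intro sums_add sums_mult geometric_sums) (use dpos d3 r0 in auto)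
  have st: "summable t" using tS by (rule sums_summable)
  have sD: "summable (\<lambda>k. \<bar>D k\<bar>)"
    by (rule summable_comparison_test[OF _ st]) (use Dt in auto)
  hence sD': "summable D" by (rule summable_rabs_cancel)
  have Gsum: "G (n + n0) = G n0 + (\<Sum>k<n. D k)" for n
    by (induction n) (auto simp: D_def)
  have "(\<lambda>n. G n0 + (\<Sum>k<n. D k)) \<longlonglongrightarrow> G n0 + suminf D"
    by (intro tendsto_add tendsto_const summable_LIMSEQ sD')
  hence "(\<lambda>n. G (n + n0)) \<longlonglongrightarrow> G n0 + suminf D" unfolding Gsum .
  hence lim: "G \<longlonglongrightarrow> G n0 + suminf D" by (rule LIMSEQ_offset)
  have "\<bar>suminf D\<bar> \<le> (\<Sum>k. \<bar>D k\<bar>)" using summable_norm[of D] sD by simp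
  also have "\<dots> \<le> suminf t" by (intro suminf_le sD st) (use Dt in auto)
  also have "suminf t = S" using tS by (rule sums_unique[symmetric])
  also have "S = c0 / (real d ^ n0 * (real d - 1)) + c1 * r ^ n0"
    unfolding S_def r_def using dpos d1 by (simp add: field_simps)
  also have "\<dots> \<le> c0 / (real d * (real d - 1)) + c1 * r"
  proof (intro add_mono)
    have "real d ^ 1 \<le> real d ^ n0" using n0 d3 by (intro power_increasing) auto
    hence "real d * (real d - 1) \<le> real d ^ n0 * (real d - 1)" using d1 by (intro mult_right_mono) auto
    thus "c0 / (real d ^ n0 * (real d - 1)) \<le> c0 / (real d * (real d - 1))"
      using c0 dpos d1 by (intro divide_left_mono) auto
    have "r ^ n0 \<le> r ^ 1" using r0 n0 by (intro power_decreasing) auto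
    thus "c1 * r ^ n0 \<le> c1 * r" using c1 by (intro mult_left_mono) auto
  qed
  finally have "\<bar>(G n0 + suminf D) - G n0\<bar> \<le> c0 / (real d * (real d - 1)) + c1 * r" by simp
  thus ?thesis using lim unfolding G_def r_def by blast
qed


lemma AB_Suc: "AB d lam alpha (Suc n) =
  (fst (AB d lam alpha n) ^ d + lam * snd (AB d lam alpha n) ^ d,
   fst (AB d lam alpha n) * snd (AB d lam alpha n) ^ (d - 1))"
  by (simp add: Let_def split_def)

lemma Qbar_add: "x \<in> Qbar \<Longrightarrow> y \<in> Qbar \<Longrightarrow> x + y \<in> Qbar"
  and Qbar_mult: "x \<in> Qbar \<Longrightarrow> y \<in> Qbar \<Longrightarrow> x * y \<in> Qbar"
  unfolding Qbar_def using algebraic_plus_times by auto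

lemma Qbar_1: "(1::complex) \<in> Qbar" and Qbar_m1: "(-1::complex) \<in> Qbar"
  unfolding Qbar_def by (auto intro: rat_imp_algebraic)

lemma Qbar_pow: "x \<in> Qbar \<Longrightarrow> x ^ n \<in> Qbar"
  by (induction n) (auto intro: Qbar_1 Qbar_mult)

lemma AB_Qbar:
  assumes "alpha \<in> Qbar" "lam \<in> Qbar"
  shows "fst (AB d lam alpha n) \<in> Qbar \<and> snd (AB d lam alpha n) \<in> Qbar"
  by (induction n) (use assms in \<open>auto simp del: AB.simps simp: AB.simps(1) AB_Suc Qbar_1 intro!: Qbar_add Qbar_mult Qbar_pow\<close>)

context
  fixes v :: "complex \<Rightarrow> real"
  assumes av: "is_absval_Qbar v"
begin

lemma v_nonneg: "x \<in> Qbar \<Longrightarrow> v x \<ge> 0" using av unfolding is_absval_Qbar_def by auto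
lemma v_zero: "x \<in> Qbar \<Longrightarrow> v x = 0 \<longleftrightarrow> x = 0" using av unfolding is_absval_Qbar_def by auto
lemma v_mult: "x \<in> Qbar \<Longrightarrow> y \<in> Qbar \<Longrightarrow> v (x * y) = v x * v y"
  using av unfolding is_absval_Qbar_def by auto
lemma v_add: "x \<in> Qbar \<Longrightarrow> y \<in> Qbar \<Longrightarrow> v (x + y) \<le> v x + v y"
  using av unfolding is_absval_Qbar_def by auto

lemma v_1: "v 1 = 1"
proof -
  have "v 1 = v 1 * v 1" using v_mult[OF Qbar_1 Qbar_1] by simp
  moreover have "v 1 \<noteq> 0" using v_zero[OF Qbar_1] by simp
  ultimately show ?thesis by (metis mult_cancel_left1)
qed

lemma v_m1: "v (-1) = 1"
proof -
  have "v (-1) * v (-1) = 1" using v_mult[OF Qbar_m1 Qbar_m1] v_1 by simp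
  moreover have "v (-1) \<ge> 0" using v_nonneg[OF Qbar_m1] .
  ultimately show ?thesis by (metis abs_of_nonneg abs_square_eq_1 power2_eq_square)
qed

lemma v_pow: "x \<in> Qbar \<Longrightarrow> v (x ^ n) = v x ^ n"
  by (induction n) (auto simp: v_1 v_mult Qbar_pow)

lemma v_sub: "x \<in> Qbar \<Longrightarrow> y \<in> Qbar \<Longrightarrow> v x \<le> v (x + y) + v y"
proof -
  assume x: "x \<in> Qbar" and y: "y \<in> Qbar"
  have "x = (x + y) + (-1) * y" by simp
  hence "v x = v ((x + y) + (-1) * y)" by metis
  also have "\<dots> \<le> v (x + y) + v ((-1) * y)" by (intro v_add Qbar_add Qbar_mult x y Qbar_m1)
  also have "v ((-1) * y) = v y" using v_mult[OF Qbar_m1 y] v_m1 by simp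
  finally show ?thesis .
qed

end

lemma pwc: "(d::nat) \<ge> 1 \<Longrightarrow> (x::complex) * x ^ (d - 1) = x ^ d"
  by (metis Suc_diff_le diff_Suc_1 power_Suc)
lemma pwc2: "(d::nat) \<ge> 2 \<Longrightarrow> (x::complex) ^ (d - 2) * x = x ^ (d - 1)"
  by (metis Suc_diff_le diff_Suc_1 diff_diff_left one_add_one power_Suc2)

theorem proposition5p8:
  fixes d :: nat and alpha lam :: complex and v :: "complex \<Rightarrow> real"
  assumes "d > 2"
    and "alpha \<in> Qbar" and "alpha \<noteq> 0"
    and "lam \<in> Qbar" and "lam \<noteq> 0"
    and "is_absval_Qbar v"
    and "L = max (v alpha) (1 / v alpha)"
    and "n0 \<ge> 1"
  shows "\<exists>h. (\<lambda>n. ln (Mv v d lam alpha n) / real d ^ n) \<longlonglongrightarrow> h \<and>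
             \<bar>h - ln (Mv v d lam alpha n0) / real d ^ n0\<bar> \<le> (3 * real d - 2) * ln (2 * L)"
proof -
  note av = assms(6)
  have d3: "d \<ge> 3" using assms(1) by simp
  define A where "A n = fst (AB d lam alpha n)" for n
  define B where "B n = snd (AB d lam alpha n)" for n
  define a where "a n = v (A n)" for n
  define b where "b n = v (B n)" for n
  define R where "R = v lam"
  have AQ: "A n \<in> Qbar" and BQ: "B n \<in> Qbar" for n
    using AB_Qbar[OF assms(2,4)] unfolding A_def B_def by auto
  have lQ: "lam \<in> Qbar" by fact
  have AS: "A (Suc n) = A n ^ d + lam * B n ^ d" and BS: "B (Suc n) = A n * B n ^ (d - 1)" for n
    unfolding A_def B_def by (simp_all del: AB.simps add: AB_Suc)
  note Q = AQ BQ lQ Qbar_pow Qbar_mult Qbar_add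
  have R0: "R > 0" unfolding R_def using v_nonneg[OF av lQ] v_zero[OF av lQ] assms(5) by simp
  have an: "a n \<ge> 0" and bn: "b n \<ge> 0" for n unfolding a_def b_def using v_nonneg[OF av] Q by auto
  have F1: "a (Suc n) \<le> a n ^ d + R * b n ^ d" for n
    unfolding a_def b_def R_def AS using v_add[OF av] v_mult[OF av] v_pow[OF av] Q by metis
  have F2: "a n ^ d \<le> a (Suc n) + R * b n ^ d" for n
  proof -
    have "v (A n ^ d) \<le> v (A n ^ d + lam * B n ^ d) + v (lam * B n ^ d)"
      by (intro v_sub[OF av] Q)
    thus ?thesis unfolding a_def b_def R_def AS using v_mult[OF av] v_pow[OF av] Q by metis
  qed
  have F2': "R * b n ^ d \<le> a (Suc n) + a n ^ d" for n
  proof -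
    have "v (lam * B n ^ d) \<le> v (lam * B n ^ d + A n ^ d) + v (A n ^ d)"
      by (intro v_sub[OF av] Q)
    thus ?thesis unfolding a_def b_def R_def AS using v_mult[OF av] v_pow[OF av] Q
      by (metis add.commute)
  qed
  have F3: "b (Suc n) = a n * b n ^ (d - 1)" for n
    unfolding a_def b_def BS using v_mult[OF av] v_pow[OF av] Q by metis
  have F4: "R * b n ^ d * b n ^ (d - 1) \<le> b n ^ (d - 1) * a (Suc n) + a n ^ (d - 1) * b (Suc n)" for n
  proof -
    have eq: "lam * B n ^ d * B n ^ (d - 1) + A n ^ (d - 1) * B (Suc n) = B n ^ (d - 1) * A (Suc n)"
      unfolding AS BS using pwc[of d "A n"] d3 by (simp add: algebra_simps)
    have "v (lam * B n ^ d * B n ^ (d - 1)) \<le> v (lam * B n ^ d * B n ^ (d - 1) + A n ^ (d - 1) * B (Suc n)) + v (A n ^ (d - 1) * B (Suc n))"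
      by (intro v_sub[OF av] Q)
    thus ?thesis unfolding eq unfolding a_def b_def R_def using v_mult[OF av] v_pow[OF av] Q by metis
  qed
  have F5: "a n ^ d * a n ^ (d - 1) \<le> a n ^ (d - 1) * a (Suc n) + R * a n ^ (d - 2) * b n * b (Suc n)" for n
  proof -
    have eq: "A n ^ d * A n ^ (d - 1) + lam * A n ^ (d - 2) * B n * B (Suc n) = A n ^ (d - 1) * A (Suc n)"
    proof -
      have "lam * A n ^ (d - 2) * B n * B (Suc n) = lam * (A n ^ (d - 2) * A n) * (B n * B n ^ (d - 1))"
        unfolding BS by (simp add: algebra_simps)
      also have "\<dots> = lam * A n ^ (d - 1) * B n ^ d" using pwc[of d "B n"] pwc2[of d "A n"] d3 by simp
      finally show ?thesis unfolding AS by (simp add: algebra_simps)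
    qed
    have "v (A n ^ d * A n ^ (d - 1)) \<le> v (A n ^ d * A n ^ (d - 1) + lam * A n ^ (d - 2) * B n * B (Suc n)) + v (lam * A n ^ (d - 2) * B n * B (Suc n))"
      by (intro v_sub[OF av] Q)
    thus ?thesis unfolding eq unfolding a_def b_def R_def using v_mult[OF av] v_pow[OF av] Q by metis
  qed
  have a0: "a 0 > 0" unfolding a_def A_def using v_nonneg[OF av assms(2)] v_zero[OF av assms(2)] assms(3) by simp
  have b0: "b 0 = 1" unfolding b_def B_def using v_1[OF av] by simp
  have Ldef: "L = max (a 0) (1 / a 0)" unfolding a_def A_def using assms(7) by simp
  have Mv: "Mv v d lam alpha n = max (a n) (b n)" for n unfolding Mv_def a_def b_def A_def B_def ..
  note ctx = d3 R0 an bn F1 F2 F3 F2' F4 F5 a0 b0 Ldef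
  have L1: "L \<ge> 1" using L1[OF ctx] .
  have mpos: "max (a n) (b n) > 0" for n using mpos[OF ctx] .
  define g where "g n = ln (max (a n) (b n))" for n
  have step: "\<bar>g (Suc n) - real d * g n\<bar> \<le> ln 2 + (3 * real d * ln (2 * L)) * (real d - 1) ^ n"
    if n1: "n \<ge> 1" for n
  proof -
    define E where "E = 2 * (2 * L) ^ (3 * d * (d - 1) ^ n)"
    have EB: "max (a (Suc n)) (b (Suc n)) \<le> E * max (a n) (b n) ^ d"
       "max (a n) (b n) ^ d \<le> E * max (a (Suc n)) (b (Suc n))"
      using E_bound[OF ctx n1] unfolding E_def by auto
    have E0: "E > 0" unfolding E_def using L1 by simp
    have lnE: "ln E = ln 2 + (3 * real d * ln (2 * L)) * (real d - 1) ^ n"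
      unfolding E_def using L1 d3 by (simp add: ln_mult ln_realpow of_nat_diff algebra_simps)
    have lnm: "ln (max (a n) (b n) ^ d) = real d * g n" unfolding g_def using mpos[of n] by (simp add: ln_realpow)
    have "ln (max (a (Suc n)) (b (Suc n))) \<le> ln (E * max (a n) (b n) ^ d)"
      using EB(1) mpos[of "Suc n"] E0 mpos[of n] by (subst ln_le_cancel_iff) auto
    also have "\<dots> = ln E + real d * g n" using E0 mpos[of n] lnm by (simp add: ln_mult)
    finally have 1: "g (Suc n) \<le> ln E + real d * g n" unfolding g_def .
    have "real d * g n \<le> ln (E * max (a (Suc n)) (b (Suc n)))"
      unfolding lnm[symmetric] using EB(2) mpos[of n] E0 mpos[of "Suc n"] by (subst ln_le_cancel_iff) auto
    also have "\<dots> = ln E + g (Suc n)" using E0 mpos[of "Suc n"] unfolding g_def by (simp add: ln_mult)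
    finally have 2: "real d * g n \<le> ln E + g (Suc n)" .
    show ?thesis using 1 2 lnE by linarith
  qed
  have c1: "3 * real d * ln (2 * L) \<ge> 0" using L1 by simp
  obtain h where h: "(\<lambda>n. g n / real d ^ n) \<longlonglongrightarrow> h"
    "\<bar>h - g n0 / real d ^ n0\<bar> \<le> ln 2 / (real d * (real d - 1)) + 3 * real d * ln (2 * L) * ((real d - 1) / real d)"
    using series_limit[OF d3 step _ c1 assms(8)] by auto
  have "ln 2 / (real d * (real d - 1)) \<le> ln 2"
  proof -
    have r3: "real d \<ge> 1" "real d - 1 \<ge> 1" using d3 by auto
    have "1 * 1 \<le> real d * (real d - 1)" by (rule mult_mono) (use r3 in auto)
    hence "ln 2 / (real d * (real d - 1)) \<le> ln 2 / 1"
      by (intro divide_left_mono) auto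
    thus ?thesis by simp
  qed
  also have "ln 2 \<le> ln (2 * L)" using L1 by simp
  finally have 1: "ln 2 / (real d * (real d - 1)) \<le> ln (2 * L)" .
  have 2: "3 * real d * ln (2 * L) * ((real d - 1) / real d) = (3 * real d - 3) * ln (2 * L)"
    using d3 by (simp add: field_simps)
  have "\<bar>h - g n0 / real d ^ n0\<bar> \<le> (3 * real d - 2) * ln (2 * L)"
    using h(2) 1 2 by (simp add: algebra_simps)
  thus ?thesis using h(1) unfolding g_def Mv by blast
qed

end
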